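(* Let $p,q,s$ be complex numbers with $p\neq0$, $q\neq 0$, $s^2\neq -1$. Let $\tilde A$ be the unital complex algebra generated by $\xi,\eta,\zeta,U,V,Z$ subject to the relations $$\zeta\xi=q^2\xi\zeta,\quad \eta\zeta=q^2\zeta\eta,\quad \xi U=pU\xi,\quad V\xi=p\xi V,\quad \eta V=pV\eta,\quad U\eta=p\eta U,$$ $$UV=VU,\quad U\zeta=\zeta U,\quad V\zeta=\zeta V,$$ $$\xi\eta=(\zeta-1)(\zeta+s^2)+UV,\qquad \eta\xi=(q^2\zeta-1)(q^2\zeta+s^2)+UV,$$ together with the requirements that $Z$ is central and $Z^2=UV$. Let $$\tilde e=\frac{1}{2(1+s^2)}\begin{pmatrix}1+s^2+2Z&0&1-s^2-2\zeta&2\xi\\ 0&1+s^2+2Z&-2\eta&s^2-1+2q^2\zeta\\ 1-s^2-2\zeta&2\xi&1+s^2-2Z&0\\ -2\eta&s^2-1+2q^2\zeta&0&1+s^2-2Z\end{pmatrix}\in\mathrm{Mat}_4(\tilde A).$$ Then $\tilde e^2=\tilde e$. Moreover, if $q^2,s^2$ are real, $|p|=1$, and $\tilde A$ carries the involution with $\zeta^*=\zeta$, $\xi^*=-\eta$, $U^*=V$, $Z^*=Z$, then $\tilde e^*=\tilde e$ (entrywise involution combined with transposition). *)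

theory Defs
  imports Complex_Main "Jordan_Normal_Form.Matrix"
begin

text \<open>A unital complex algebra: a unital ring 'a together with a unital ring
  homomorphism c from the complex numbers into the centre of 'a
  (c z is the scalar z times the unit).\<close>
definition complex_algebra :: "(complex \<Rightarrow> 'a::ring_1) \<Rightarrow> bool" where
  "complex_algebra c \<longleftrightarrow>
     (\<forall>z w. c (z + w) = c z + c w) \<and> (\<forall>z w. c (z * w) = c z * c w) \<and>
     c 1 = 1 \<and> (\<forall>z x. c z * x = x * c z)"

definition algebra_involution :: "(complex \<Rightarrow> 'a::ring_1) \<Rightarrow> ('a \<Rightarrow> 'a) \<Rightarrow> bool" where
  "algebra_involution c st \<longleftrightarrow>
     (\<forall>x y. st (x + y) = st x + st y) \<and> (\<forall>x y. st (x * y) = st y * st x) \<and>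
     (\<forall>x. st (st x) = x) \<and> (\<forall>z x. st (c z * x) = c (cnj z) * st x)"

definition mat_star :: "('a \<Rightarrow> 'a) \<Rightarrow> 'a mat \<Rightarrow> 'a mat" where
  "mat_star st M = transpose_mat (map_mat st M)"

definition tilde_e :: "(complex \<Rightarrow> 'a::ring_1) \<Rightarrow> complex \<Rightarrow> complex \<Rightarrow>
    'a \<Rightarrow> 'a \<Rightarrow> 'a \<Rightarrow> 'a \<Rightarrow> 'a mat" where
  "tilde_e c q s \<xi> \<eta> \<zeta> Z = smult_mat (c (1 / (2 * (1 + s^2)))) (mat_of_rows_list 4
     [[c (1 + s^2) + c 2 * Z, 0, c (1 - s^2) - c 2 * \<zeta>, c 2 * \<xi>],
      [0, c (1 + s^2) + c 2 * Z, - (c 2 * \<eta>), c (s^2 - 1) + c (2 * q^2) * \<zeta>],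
      [c (1 - s^2) - c 2 * \<zeta>, c 2 * \<xi>, c (1 + s^2) - c 2 * Z, 0],
      [- (c 2 * \<eta>), c (s^2 - 1) + c (2 * q^2) * \<zeta>, 0, c (1 + s^2) - c 2 * Z]])"

end

theory Submission
  imports Defs
begin
lemma less4: "(i::nat) < 4 \<Longrightarrow> i = 0 \<or> i = 1 \<or> i = 2 \<or> i = 3" by auto

lemma sum4: "(\<Sum>k\<in>{0..<4::nat}. f k) = f 0 + f 1 + f 2 + (f 3 :: 'a::comm_monoid_add)"
  by (simp add: numeral_eq_Suc atLeast0LessThan lessThan_Suc add.commute add.left_commute)

lemma mrl4: "mat_of_rows_list 4 [r1, r2, r3, r4] \<in> carrier_mat 4 4"
proof -
  have l: "length [r1, r2, r3, r4] = 4" by simp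
  show ?thesis unfolding mat_of_rows_list_def l by (rule mat_carrier)
qed

lemma half_lemma: "(t::complex) \<noteq> 0 \<Longrightarrow> 1 / (2 * t) * t + 1 / (2 * t) * t = 1"
  by (simp add: field_simps)

lemma block_sq:
  fixes T Z' a x y b :: "'a::ring_1"
  assumes Tc: "\<forall>w. T * w = w * T" and Zc: "\<forall>w. Z' * w = w * Z'"
    and h1: "a * a + x * y = T * T - Z' * Z'"
    and h2: "a * x + x * b = 0" and h3: "y * a + b * y = 0"
    and h4: "y * x + b * b = T * T - Z' * Z'"
  shows "mat_of_rows_list 4 [[T+Z',0,a,x],[0,T+Z',y,b],[a,x,T-Z',0],[y,b,0,T-Z']] *
         mat_of_rows_list 4 [[T+Z',0,a,x],[0,T+Z',y,b],[a,x,T-Z',0],[y,b,0,T-Z']] =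
         smult_mat (T + T) (mat_of_rows_list 4 [[T+Z',0,a,x],[0,T+Z',y,b],[a,x,T-Z',0],[y,b,0,T-Z']])"
    (is "?M * ?M = _")
proof -
  have xy: "x * y = T * T - Z' * Z' - a * a" using h1 by (simp add: algebra_simps)
  have xb: "x * b = - (a * x)" using h2 by (simp add: add_eq_0_iff)
  have by': "b * y = - (y * a)" using h3 by (simp add: add_eq_0_iff)
  have bb: "b * b = T * T - Z' * Z' - y * x" using h4 by (simp add: algebra_simps)
  have c1: "a * T = T * a" "x * T = T * x" "y * T = T * y" "b * T = T * b" "Z' * T = T * Z'"
    using Tc by metis+
  have c2: "a * Z' = Z' * a" "x * Z' = Z' * x" "y * Z' = Z' * y" "b * Z' = Z' * b"
    using Zc by metis+
  show ?thesis
  proof (rule eq_matI)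
    fix i j assume i: "i < dim_row (smult_mat (T + T) ?M)" and j: "j < dim_col (smult_mat (T + T) ?M)"
    hence i4: "i < 4" and j4: "j < 4" by (simp_all add: mat_of_rows_list_def)
    show "(?M * ?M) $$ (i, j) = smult_mat (T + T) ?M $$ (i, j)"
      using less4[OF i4] less4[OF j4]
      by (auto simp: mat_of_rows_list_def scalar_prod_def sum4 row_def col_def
          distrib_left distrib_right left_diff_distrib right_diff_distrib xy xb by' bb c1 c2 algebra_simps)
  qed (auto simp: mat_of_rows_list_def)
qed

context
  fixes c :: "complex \<Rightarrow> 'a::ring_1"
  assumes alg: "complex_algebra c"
begin

lemma c_add: "c (z + w) = c z + c w" and c_mul: "c (z * w) = c z * c w" and c_one: "c 1 = 1"
  and c_comm: "c z * x = x * c z"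
  using alg unfolding complex_algebra_def by blast+

lemma c_zero: "c 0 = 0"
  by (metis add.right_neutral add_left_imp_eq add_0 c_add)

lemma c_neg: "c (- z) = - c z"
  using minus_unique[of "c z" "c (-z)"] c_add[of z "-z"] c_zero by simp

lemma c_diff: "c (z - w) = c z - c w"
  using c_add[of z "-w"] c_neg by simp

lemma c_mul_assoc: "c z * (c w * x) = c (z * w) * x"
  by (simp add: c_mul mult.assoc)

lemma c_commL: "x * (c z * y) = c z * (x * y)"
  by (metis c_comm mult.assoc)

definition Lin :: "'a \<Rightarrow> complex \<Rightarrow> complex \<Rightarrow> 'a" where
  "Lin w a0 a1 = c a0 + c a1 * w"

lemma Lin_mult: "Lin w a0 a1 * Lin w b0 b1 =
   c (a0*b0) + c (a0*b1 + a1*b0) * w + c (a1*b1) * (w*w)"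
proof -
  have r: "w * c z = c z * w" "w * (c z * y) = c z * (w * y)" for z y
    using c_comm c_commL by metis+
  show ?thesis
    by (simp add: Lin_def distrib_left distrib_right c_add c_mul_assoc r mult.assoc c_mul[symmetric] add_ac mult.commute)
qed


definition F :: "'a \<Rightarrow> 'a \<Rightarrow> complex \<Rightarrow> complex \<Rightarrow> complex \<Rightarrow> complex \<Rightarrow> 'a" where
  "F w u a0 a1 a2 a3 = c a0 + c a1 * w + c a2 * (w*w) + c a3 * u"

lemma Lin_multF: "Lin w a0 a1 * Lin w b0 b1 = F w u (a0*b0) (a0*b1 + a1*b0) (a1*b1) 0"
  by (simp add: Lin_mult F_def c_zero)

lemma F_add: "F w u a0 a1 a2 a3 + F w u b0 b1 b2 b3 = F w u (a0+b0) (a1+b1) (a2+b2) (a3+b3)"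
  by (simp add: F_def c_add distrib_right add_ac)

lemma F_diff: "F w u a0 a1 a2 a3 - F w u b0 b1 b2 b3 = F w u (a0-b0) (a1-b1) (a2-b2) (a3-b3)"
  by (simp add: F_def c_diff left_diff_distrib algebra_simps)

lemma F_smult: "c k * F w u a0 a1 a2 a3 = F w u (k*a0) (k*a1) (k*a2) (k*a3)"
  by (simp add: F_def distrib_left c_mul_assoc c_mul)

lemma F_cong: "a0 = b0 \<Longrightarrow> a1 = b1 \<Longrightarrow> a2 = b2 \<Longrightarrow> a3 = b3 \<Longrightarrow> F w u a0 a1 a2 a3 = F w u b0 b1 b2 b3"
  by simp

lemma Lin_add: "Lin w a0 a1 + Lin w b0 b1 = Lin w (a0+b0) (a1+b1)"
  by (simp add: Lin_def c_add distrib_right add_ac)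

lemma Lin_zero: "Lin w 0 0 = 0"
  by (simp add: Lin_def c_zero)

lemma Lin_xi:
  assumes r1: "\<zeta> * \<xi> = c (q^2) * \<xi> * \<zeta>"
  shows "Lin \<zeta> a0 a1 * \<xi> = \<xi> * Lin \<zeta> a0 (a1 * q^2)"
proof -
  have r1': "\<zeta> * \<xi> = c (q^2) * (\<xi> * \<zeta>)" using r1 by (simp only: mult.assoc)
  have "Lin \<zeta> a0 a1 * \<xi> = c a0 * \<xi> + c a1 * (\<zeta> * \<xi>)"
    by (simp only: Lin_def distrib_right mult.assoc)
  also have "\<dots> = c a0 * \<xi> + c (a1 * q^2) * (\<xi> * \<zeta>)"
    by (simp only: r1' c_mul_assoc)
  also have "\<dots> = \<xi> * Lin \<zeta> a0 (a1 * q^2)"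
    by (simp only: Lin_def distrib_left c_comm[of _ \<xi>] c_commL[of \<xi>])
  finally show ?thesis .
qed
lemma h2:
  assumes r1: "\<zeta> * \<xi> = c (q^2) * \<xi> * \<zeta>"
  shows "(c (1 - s^2) - c 2 * \<zeta>) * (c 2 * \<xi>) + (c 2 * \<xi>) * (c (s^2 - 1) + c (2 * q^2) * \<zeta>) = 0"
proof -
  have a: "c (1 - s^2) - c 2 * \<zeta> = Lin \<zeta> (1 - s^2) (-2)"
    by (simp add: Lin_def c_neg)
  have b: "c (s^2 - 1) + c (2 * q^2) * \<zeta> = Lin \<zeta> (s^2 - 1) (2 * q^2)"
    by (simp add: Lin_def)
  have "Lin \<zeta> (1 - s^2) (-2) * (c 2 * \<xi>) = c 2 * (Lin \<zeta> (1 - s^2) (-2) * \<xi>)"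
    by (rule c_commL)
  also have "\<dots> = c 2 * (\<xi> * Lin \<zeta> (1 - s^2) (-2 * q^2))"
    using Lin_xi[OF r1] by simp
  finally have e1: "Lin \<zeta> (1 - s^2) (-2) * (c 2 * \<xi>) = c 2 * (\<xi> * Lin \<zeta> (1 - s^2) (-2 * q^2))" .
  have "(c (1 - s^2) - c 2 * \<zeta>) * (c 2 * \<xi>) + (c 2 * \<xi>) * (c (s^2 - 1) + c (2 * q^2) * \<zeta>)
     = c 2 * (\<xi> * (Lin \<zeta> (1 - s^2) (-2 * q^2) + Lin \<zeta> (s^2 - 1) (2 * q^2)))"
    unfolding a b e1 by (simp only: mult.assoc distrib_left)
  also have "\<dots> = 0" unfolding Lin_add by (simp add: Lin_zero)
  finally show ?thesis .
qed
lemma eta_Lin: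
  assumes r2: "\<eta> * \<zeta> = c (q^2) * \<zeta> * \<eta>"
  shows "\<eta> * Lin \<zeta> a0 a1 = Lin \<zeta> a0 (a1 * q^2) * \<eta>"
proof -
  have r2': "\<eta> * \<zeta> = c (q^2) * (\<zeta> * \<eta>)" using r2 by (simp only: mult.assoc)
  have "\<eta> * Lin \<zeta> a0 a1 = c a0 * \<eta> + c a1 * (\<eta> * \<zeta>)"
    by (simp only: Lin_def distrib_left c_comm[of _ \<eta>] c_commL[of \<eta>])
  also have "\<dots> = c a0 * \<eta> + c (a1 * q^2) * (\<zeta> * \<eta>)"
    by (simp only: r2' c_mul_assoc)
  also have "\<dots> = Lin \<zeta> a0 (a1 * q^2) * \<eta>"
    by (simp only: Lin_def distrib_right mult.assoc)
  finally show ?thesis .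
qed

lemma h3:
  assumes r2: "\<eta> * \<zeta> = c (q^2) * \<zeta> * \<eta>"
  shows "(- (c 2 * \<eta>)) * (c (1 - s^2) - c 2 * \<zeta>) + (c (s^2 - 1) + c (2 * q^2) * \<zeta>) * (- (c 2 * \<eta>)) = 0"
proof -
  have a: "c (1 - s^2) - c 2 * \<zeta> = Lin \<zeta> (1 - s^2) (-2)"
    by (simp add: Lin_def c_neg)
  have b: "c (s^2 - 1) + c (2 * q^2) * \<zeta> = Lin \<zeta> (s^2 - 1) (2 * q^2)"
    by (simp add: Lin_def)
  have e1: "(- (c 2 * \<eta>)) * Lin \<zeta> (1 - s^2) (-2) = - (c 2 * (Lin \<zeta> (1 - s^2) (-2 * q^2) * \<eta>))"
    using eta_Lin[OF r2, of "1 - s^2" "-2"] by (simp only: mult_minus_left mult.assoc)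
  have e2: "Lin \<zeta> (s^2 - 1) (2 * q^2) * (- (c 2 * \<eta>)) = - (c 2 * (Lin \<zeta> (s^2 - 1) (2 * q^2) * \<eta>))"
    by (simp only: mult_minus_right c_commL)
  have "(- (c 2 * \<eta>)) * (c (1 - s^2) - c 2 * \<zeta>) + (c (s^2 - 1) + c (2 * q^2) * \<zeta>) * (- (c 2 * \<eta>))
      = - (c 2 * ((Lin \<zeta> (1 - s^2) (-2 * q^2) + Lin \<zeta> (s^2 - 1) (2 * q^2)) * \<eta>))"
    unfolding a b e1 e2 by (simp only: distrib_right distrib_left minus_add_distrib)
  also have "\<dots> = 0" unfolding Lin_add by (simp add: Lin_zero)
  finally show ?thesis .
qed

lemma c_two: "c 2 = 2"
  using c_add[of 1 1] c_one by (simp only: one_add_one)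
lemma h1:
  assumes r10: "\<xi> * \<eta> = (\<zeta> - 1) * (\<zeta> + c (s^2)) + U * V"
    and Z2: "Z^2 = U * V"
  shows "(c (1 - s^2) - c 2 * \<zeta>) * (c (1 - s^2) - c 2 * \<zeta>) + (c 2 * \<xi>) * (- (c 2 * \<eta>))
     = (c (1 + s^2)) * (c (1 + s^2)) - (c 2 * Z) * (c 2 * Z)"
proof -
  have a: "c (1 - s^2) - c 2 * \<zeta> = Lin \<zeta> (1 - s^2) (-2)"
    by (simp add: Lin_def c_neg)
  have xy: "(c 2 * \<xi>) * (- (c 2 * \<eta>)) = c (-(2*2)) * (\<xi> * \<eta>)"
    by (simp only: mult_minus_right mult.assoc c_commL[of \<xi>] c_mul_assoc c_neg mult_minus_left)
  have l1: "Lin \<zeta> (-1) 1 = \<zeta> - 1" by (simp add: Lin_def c_neg c_one)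
  have l2: "Lin \<zeta> (s^2) 1 = \<zeta> + c (s^2)" by (simp add: Lin_def c_one add.commute)
  have uv: "F \<zeta> (U*V) 0 0 0 1 = U * V" by (simp add: F_def c_zero c_one)
  have xe: "\<xi> * \<eta> = Lin \<zeta> (-1) 1 * Lin \<zeta> (s^2) 1 + F \<zeta> (U*V) 0 0 0 1"
    by (simp only: r10 l1 l2 uv)
  have Z2': "Z * Z = U * V" using Z2 by (simp add: power2_eq_square)
  have zz: "(c 2 * Z) * (c 2 * Z) = c (2*2) * F \<zeta> (U*V) 0 0 0 1"
    by (simp only: mult.assoc c_commL[of Z] c_mul_assoc uv Z2')
  have tt: "c (1 + s^2) * c (1 + s^2) = F \<zeta> (U*V) ((1+s^2)*(1+s^2)) 0 0 0"
    by (simp add: F_def c_zero c_mul)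
  show ?thesis
    unfolding a xy xe zz tt Lin_multF[where u="U*V"] F_add F_smult F_diff
    by (rule F_cong) (simp_all add: algebra_simps)
qed

lemma h4:
  assumes r11: "\<eta> * \<xi> = (c (q^2) * \<zeta> - 1) * (c (q^2) * \<zeta> + c (s^2)) + U * V"
    and Z2: "Z^2 = U * V"
  shows "(- (c 2 * \<eta>)) * (c 2 * \<xi>) + (c (s^2 - 1) + c (2 * q^2) * \<zeta>) * (c (s^2 - 1) + c (2 * q^2) * \<zeta>)
     = (c (1 + s^2)) * (c (1 + s^2)) - (c 2 * Z) * (c 2 * Z)"
proof -
  have b: "c (s^2 - 1) + c (2 * q^2) * \<zeta> = Lin \<zeta> (s^2 - 1) (2 * q^2)"
    by (simp add: Lin_def)
  have yx: "(- (c 2 * \<eta>)) * (c 2 * \<xi>) = c (-(2*2)) * (\<eta> * \<xi>)"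
    by (simp only: mult_minus_left mult.assoc c_commL[of \<eta>] c_mul_assoc c_neg)
  have l1: "Lin \<zeta> (-1) (q^2) = c (q^2) * \<zeta> - 1" by (simp add: Lin_def c_neg c_one)
  have l2: "Lin \<zeta> (s^2) (q^2) = c (q^2) * \<zeta> + c (s^2)" by (simp add: Lin_def add.commute)
  have uv: "F \<zeta> (U*V) 0 0 0 1 = U * V" by (simp add: F_def c_zero c_one)
  have xe: "\<eta> * \<xi> = Lin \<zeta> (-1) (q^2) * Lin \<zeta> (s^2) (q^2) + F \<zeta> (U*V) 0 0 0 1"
    by (simp only: r11 l1 l2 uv)
  have Z2': "Z * Z = U * V" using Z2 by (simp add: power2_eq_square)
  have zz: "(c 2 * Z) * (c 2 * Z) = c (2*2) * F \<zeta> (U*V) 0 0 0 1"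
    by (simp only: mult.assoc c_commL[of Z] c_mul_assoc uv Z2')
  have tt: "c (1 + s^2) * c (1 + s^2) = F \<zeta> (U*V) ((1+s^2)*(1+s^2)) 0 0 0"
    by (simp add: F_def c_zero c_mul)
  show ?thesis
    unfolding b yx xe zz tt Lin_multF[where u="U*V"] F_add F_smult F_diff
    by (rule F_cong) (simp_all add: algebra_simps)
qed
end

context
  fixes c :: "complex \<Rightarrow> 'a::ring_1" and st :: "'a \<Rightarrow> 'a"
  assumes alg: "complex_algebra c" and inv: "algebra_involution c st"
begin

lemma st_add: "st (x + y) = st x + st y" and st_mul: "st (x * y) = st y * st x"
  and st_inv: "st (st x) = x" and st_cmul: "st (c z * x) = c (cnj z) * st x"
  using inv unfolding algebra_involution_def by blast+

lemma st_one: "st 1 = 1"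
proof -
  have "st 1 = st 1 * st (st 1)" by (simp only: st_inv mult_1_right)
  also have "\<dots> = st (st 1 * 1)" by (simp only: st_mul)
  also have "\<dots> = 1" by (simp only: mult_1_right st_inv)
  finally show ?thesis .
qed

lemma st_zero: "st 0 = 0"
  by (metis add.right_neutral add_left_imp_eq add_0 st_add)

lemma st_neg: "st (- x) = - st x"
  using minus_unique[of "st x" "st (-x)"] st_add[of x "-x"] st_zero by simp

lemma st_diff: "st (x - y) = st x - st y"
  using st_add[of x "-y"] st_neg by simp

lemma st_c: "st (c z) = c (cnj z)"
  using st_cmul[of z 1] st_one by simp
end

lemma smult_sq:
  fixes A :: "'b::ring_1 mat"
  assumes kc: "\<forall>w. k * w = w * k" and A: "A \<in> carrier_mat n n"
  shows "smult_mat k A * smult_mat k A = smult_mat (k * k) (A * A)"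
proof -
  have kk: "k * x * (k * y) = k * k * (x * y)" for x y
  proof -
    have xk: "x * k = k * x" using kc[rule_format, of x] by (rule sym)
    have "k * x * (k * y) = k * ((x * k) * y)" by (simp only: mult.assoc)
    also have "\<dots> = k * k * (x * y)" by (simp only: xk mult.assoc)
    finally show ?thesis .
  qed
  have dr: "dim_row A = n" and dc: "dim_col A = n" using A by auto
  show ?thesis
  proof (rule eq_matI)
    fix i j assume i: "i < dim_row (smult_mat (k * k) (A * A))" and j: "j < dim_col (smult_mat (k * k) (A * A))"
    hence i': "i < n" and j': "j < n" by (simp_all add: dr dc)
    have "(smult_mat k A * smult_mat k A) $$ (i, j) = (\<Sum>l\<in>{0..<n}. (k * A $$ (i,l)) * (k * A $$ (l,j)))"
      using i' j' by (simp add: dr dc scalar_prod_def row_def col_def)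
    also have "\<dots> = (\<Sum>l\<in>{0..<n}. k * k * (A $$ (i,l) * A $$ (l,j)))"
      by (simp only: kk)
    also have "\<dots> = k * k * (\<Sum>l\<in>{0..<n}. A $$ (i,l) * A $$ (l,j))"
      by (simp only: sum_distrib_left)
    also have "\<dots> = smult_mat (k * k) (A * A) $$ (i, j)"
      using i' j' by (simp add: dr dc scalar_prod_def row_def col_def)
    finally show "(smult_mat k A * smult_mat k A) $$ (i, j) = smult_mat (k * k) (A * A) $$ (i, j)" .
  qed (simp_all add: dr dc)
qed

lemma smult_smult:
  fixes A :: "'b::ring_1 mat"
  shows "smult_mat k (smult_mat l A) = smult_mat (k * l) A"
  by (rule eq_matI) (simp_all add: mult.assoc)


theorem mainTheorem3:
  fixes c :: "complex \<Rightarrow> 'a::ring_1"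
    and p q s :: complex
    and \<xi> \<eta> \<zeta> U V Z :: 'a
  assumes alg: "complex_algebra c"
    and p0: "p \<noteq> 0" and q0: "q \<noteq> 0" and s0: "s^2 \<noteq> -1"
    and r1: "\<zeta> * \<xi> = c (q^2) * \<xi> * \<zeta>"
    and r2: "\<eta> * \<zeta> = c (q^2) * \<zeta> * \<eta>"
    and r3: "\<xi> * U = c p * U * \<xi>"
    and r4: "V * \<xi> = c p * \<xi> * V"
    and r5: "\<eta> * V = c p * V * \<eta>"
    and r6: "U * \<eta> = c p * \<eta> * U"
    and r7: "U * V = V * U"
    and r8: "U * \<zeta> = \<zeta> * U"
    and r9: "V * \<zeta> = \<zeta> * V"
    and r10: "\<xi> * \<eta> = (\<zeta> - 1) * (\<zeta> + c (s^2)) + U * V"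
    and r11: "\<eta> * \<xi> = (c (q^2) * \<zeta> - 1) * (c (q^2) * \<zeta> + c (s^2)) + U * V"
    and Zc: "\<forall>x. Z * x = x * Z"
    and Z2: "Z^2 = U * V"
  shows "tilde_e c q s \<xi> \<eta> \<zeta> Z * tilde_e c q s \<xi> \<eta> \<zeta> Z = tilde_e c q s \<xi> \<eta> \<zeta> Z \<and>
    (\<forall>st. (q^2 \<in> \<real> \<and> s^2 \<in> \<real> \<and> cmod p = 1 \<and> algebra_involution c st \<and>
          st \<zeta> = \<zeta> \<and> st \<xi> = - \<eta> \<and> st U = V \<and> st Z = Z)
      \<longrightarrow> mat_star st (tilde_e c q s \<xi> \<eta> \<zeta> Z) = tilde_e c q s \<xi> \<eta> \<zeta> Z)"
  proof -
  let ?a = "c (1 - s^2) - c 2 * \<zeta>" and ?x = "c 2 * \<xi>" and ?y = "- (c 2 * \<eta>)"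
    and ?b = "c (s^2 - 1) + c (2 * q^2) * \<zeta>" and ?T = "c (1 + s^2)" and ?Z = "c 2 * Z"
  let ?M = "mat_of_rows_list 4 [[?T + ?Z, 0, ?a, ?x], [0, ?T + ?Z, ?y, ?b], [?a, ?x, ?T - ?Z, 0], [?y, ?b, 0, ?T - ?Z]]"
  let ?al = "1 / (2 * (1 + s^2))"
  have E: "tilde_e c q s \<xi> \<eta> \<zeta> Z = smult_mat (c ?al) ?M"
    unfolding tilde_e_def by (rule refl)
  have Tc: "\<forall>w. ?T * w = w * ?T" using c_comm[OF alg] by blast
  have Zc': "\<forall>w. ?Z * w = w * ?Z"
  proof
    fix w
    have "?Z * w = c 2 * (Z * w)" by (simp only: mult.assoc)
    also have "\<dots> = c 2 * (w * Z)" by (simp only: Zc[rule_format, of w])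
    also have "\<dots> = w * ?Z" by (rule c_commL[OF alg, symmetric])
    finally show "?Z * w = w * ?Z" .
  qed
  have sq: "?M * ?M = smult_mat (?T + ?T) ?M"
    by (rule block_sq[OF Tc Zc' h1[OF alg r10 Z2] h2[OF alg r1] h3[OF alg r2] h4[OF alg r11 Z2]])
  have Mc: "?M \<in> carrier_mat 4 4" by (rule mrl4)
  have alc: "\<forall>w. c ?al * w = w * c ?al" by (intro allI) (rule c_comm[OF alg])
  have t0: "1 + s^2 \<noteq> 0" using s0 by (simp add: add_eq_0_iff)
  have one: "c ?al * (?T + ?T) = 1"
  proof -
    have e: "?al * (1 + s^2) + ?al * (1 + s^2) = 1" by (rule half_lemma[OF t0])
    have "c ?al * (?T + ?T) = c (?al * (1 + s^2) + ?al * (1 + s^2))"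
      by (simp only: distrib_left c_mul[OF alg, symmetric] c_add[OF alg, symmetric])
    also have "\<dots> = 1" by (simp only: e c_one[OF alg])
    finally show ?thesis .
  qed
  have part1: "tilde_e c q s \<xi> \<eta> \<zeta> Z * tilde_e c q s \<xi> \<eta> \<zeta> Z = tilde_e c q s \<xi> \<eta> \<zeta> Z"
    unfolding E smult_sq[OF alc Mc] sq smult_smult
    by (simp only: mult.assoc one mult_1_right)
  have part2: "mat_star st (tilde_e c q s \<xi> \<eta> \<zeta> Z) = tilde_e c q s \<xi> \<eta> \<zeta> Z"
    if H: "q^2 \<in> \<real> \<and> s^2 \<in> \<real> \<and> cmod p = 1 \<and> algebra_involution c st \<and>
          st \<zeta> = \<zeta> \<and> st \<xi> = - \<eta> \<and> st U = V \<and> st Z = Z" for st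
  proof -
    have inv: "algebra_involution c st" and sz: "st \<zeta> = \<zeta>" and sx: "st \<xi> = - \<eta>"
      and sZ: "st Z = Z" using H by auto
    have se: "st \<eta> = - \<xi>"
    proof -
      have "\<xi> = st (st \<xi>)" by (rule st_inv[OF alg inv, symmetric])
      also have "\<dots> = - st \<eta>" by (simp only: sx st_neg[OF alg inv])
      finally show ?thesis by simp
    qed
    have cs: "cnj s ^ 2 = s ^ 2"
    proof -
      have "cnj (s^2) = s^2" using H by (simp add: Reals_cnj_iff)
      thus ?thesis by simp
    qed
    have cq: "cnj q ^ 2 = q ^ 2"
    proof -
      have "cnj (q^2) = q^2" using H by (simp add: Reals_cnj_iff)
      thus ?thesis by simp
    qed
    show ?thesis
    proof (rule eq_matI)
      fix i j assume i: "i < dim_row (tilde_e c q s \<xi> \<eta> \<zeta> Z)" and j: "j < dim_col (tilde_e c q s \<xi> \<eta> \<zeta> Z)"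
      hence i4: "i < 4" and j4: "j < 4" by (simp_all add: E mat_of_rows_list_def)
      show "mat_star st (tilde_e c q s \<xi> \<eta> \<zeta> Z) $$ (i, j) = tilde_e c q s \<xi> \<eta> \<zeta> Z $$ (i, j)"
        using less4[OF i4] less4[OF j4]
        by (auto simp: E mat_star_def mat_of_rows_list_def st_add[OF alg inv] st_diff[OF alg inv]
          st_neg[OF alg inv] st_cmul[OF alg inv] st_c[OF alg inv] st_zero[OF alg inv] sz sx se sZ cs cq)
    qed (simp_all add: E mat_star_def mat_of_rows_list_def)
  qed
  show ?thesis using part1 part2 by blast
qed

end
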